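(* Let $\mathcal{N}=\{1,\dots,N\}$ be a finite set of blocks with centers $\bm{r}_n\in\mathbb{R}^3$, $\mathcal{I}=\{1,\dots,I\}$ a finite set of users, $\gamma_{n,n'}=\|\bm{r}_n-\bm{r}_{n'}\|$. Fix a phase shift vector $\bm{c}$, pairwise distinct real numbers $\mu_1,\dots,\mu_N$ (the mean RSS values $\mu_n=\mu_n(\bm{c})$), $\sigma>0$, and for each user $i$ prior probabilities $p_{i,n}>0$ with $\sum_{n}p_{i,n}=1$. Let $\mathbb{P}(s\mid\bm{c},n)=\frac{1}{\sqrt{2\pi\sigma^2}}e^{-(s-\mu_n)^2/(2\sigma^2)}$. For a decision function $\mathcal{L}$ (a map $(i,n',s_i)\mapsto\mathcal{L}(n'\mid\bm{c},s_i,\{p_{i,n}\})\in\{0,1\}$ with $\sum_{n'}\mathcal{L}(n'\mid\bm{c},s_i,\{p_{i,n}\})=1$ for all $i,s_i$) let $$l(\bm{c},\mathcal{L})=\sum_{i\in\mathcal{I}}\sum_{\substack{n,n'\in\mathcal{N}\\ n\neq n'}}p_{i,n}\gamma_{n,n'}\int_{\mathbb{R}}\mathbb{P}(s_i\mid\bm{c},n)\,\mathcal{L}(n'\mid\bm{c},s_i,\{p_{i,n}\})\,ds_i,$$ and let $\mathcal{L}^*$ be a decision function minimizing $l(\bm{c},\cdot)$ (so $l(\bm{c},\mathcal{L}^* )=\inf_{\mathcal{L}}l(\bm{c},\mathcal{L})$). Define $$d_{i,n,n'}=\frac{(\mu_{n'}-\mu_n)^2-2\sigma^2\ln\frac{p_{i,n'}}{p_{i,n}}}{2\sigma|\mu_{n'}-\mu_n|},\qquad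 l_a(\bm{c})=\sum_{i\in\mathcal{I}}\sum_{\substack{n,n'\in\mathcal{N}\\ n\neq n'}}p_{i,n}\gamma_{n,n'}\,Q(d_{i,n,n'}),$$ where $Q(x)=\frac{1}{\sqrt{2\pi}}\int_x^\infty e^{-t^2/2}dt$ is the Gaussian Q function. Then $l_a(\bm{c})\ge l(\bm{c},\mathcal{L}^* )$.
   Context: This models RSS-based localization: the RSS measured by a user in block $n$ under phase shift vector $\bm{c}$ is Gaussian with mean $\mu_n(\bm{c})$ and variance $\sigma^2$; $p_{i,n}$ is the prior probability that user $i$ is in block $n$; $\gamma_{n,n'}$ is the loss of estimating block $n'$ when the true block is $n$. *)

theory Defs
  imports "HOL-Analysis.Analysis"
begin

definition gauss_pdf :: "real \<Rightarrow> real \<Rightarrow> real \<Rightarrow> real" where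
  "gauss_pdf m \<sigma> s = exp (- ((s - m)^2) / (2 * \<sigma>^2)) / sqrt (2 * pi * \<sigma>^2)"

definition Qfun :: "real \<Rightarrow> real" where
  "Qfun x = (1 / sqrt (2 * pi)) * (LBINT t:{x..}. exp (- (t^2) / 2))"

text \<open>Decision functions: L i n' s is the indicator of deciding block n' for user i with RSS s.
  Measurability in s is required so that the integrals in the loss are meaningful.\<close>
definition decision_fun :: "nat set \<Rightarrow> nat set \<Rightarrow> (nat \<Rightarrow> nat \<Rightarrow> real \<Rightarrow> real) \<Rightarrow> bool" where
  "decision_fun Users Blocks L \<longleftrightarrow>
     (\<forall>i\<in>Users. \<forall>n'\<in>Blocks. \<forall>s. L i n' s \<in> {0, 1}) \<and>
     (\<forall>i\<in>Users. \<forall>s. (\<Sum>n'\<in>Blocks. L i n' s) = 1) \<and>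
     (\<forall>i\<in>Users. \<forall>n'\<in>Blocks. L i n' \<in> borel_measurable lborel)"

definition loss :: "nat set \<Rightarrow> nat set \<Rightarrow> (nat \<Rightarrow> real^3) \<Rightarrow> (nat \<Rightarrow> real) \<Rightarrow> real
     \<Rightarrow> (nat \<Rightarrow> nat \<Rightarrow> real) \<Rightarrow> (nat \<Rightarrow> nat \<Rightarrow> real \<Rightarrow> real) \<Rightarrow> real" where
  "loss Users Blocks r \<mu> \<sigma> p L =
     (\<Sum>i\<in>Users. \<Sum>(n, n')\<in>{(n, n'). n \<in> Blocks \<and> n' \<in> Blocks \<and> n \<noteq> n'}.
        p i n * dist (r n) (r n') *
        (\<integral>s. gauss_pdf (\<mu> n) \<sigma> s * L i n' s \<partial>lborel))"

definition d_val :: "real \<Rightarrow> (nat \<Rightarrow> real) \<Rightarrow> (nat \<Rightarrow> nat \<Rightarrow> real) \<Rightarrow> nat \<Rightarrow> nat \<Rightarrow> nat \<Rightarrow> real" where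
  "d_val \<sigma> \<mu> p i n n' =
     ((\<mu> n' - \<mu> n)^2 - 2 * \<sigma>^2 * ln (p i n' / p i n)) / (2 * \<sigma> * \<bar>\<mu> n' - \<mu> n\<bar>)"

definition loss_approx :: "nat set \<Rightarrow> nat set \<Rightarrow> (nat \<Rightarrow> real^3) \<Rightarrow> (nat \<Rightarrow> real) \<Rightarrow> real
     \<Rightarrow> (nat \<Rightarrow> nat \<Rightarrow> real) \<Rightarrow> real" where
  "loss_approx Users Blocks r \<mu> \<sigma> p =
     (\<Sum>i\<in>Users. \<Sum>(n, n')\<in>{(n, n'). n \<in> Blocks \<and> n' \<in> Blocks \<and> n \<noteq> n'}.
        p i n * dist (r n) (r n') * Qfun (d_val \<sigma> \<mu> p i n n'))"

end

theory Submission imports Defs "HOL-Probability.Distributions" begin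

lemma gauss_shift:
  assumes "\<sigma> > 0" and that: "c = \<sigma> \<or> c = - \<sigma>"
  shows "gauss_pdf m \<sigma> (m + c * x) = exp (- (x^2) / 2) / (\<sigma> * sqrt (2 * pi))"
proof -
  have "(m + c*x - m)^2 / (2*\<sigma>^2) = x^2/2" using that assms by (auto simp: power2_eq_square field_simps)
  moreover have "sqrt (2 * pi * \<sigma>^2) = \<sigma> * sqrt (2*pi)" using assms by (simp add: real_sqrt_mult)
  ultimately show ?thesis unfolding gauss_pdf_def by (simp add: mult.commute)
qed

lemma upper_tail:
  assumes s: "\<sigma> > 0"
  shows "(\<integral>s. gauss_pdf m \<sigma> s * indicator {a..} s \<partial>lborel) = Qfun ((a - m) / \<sigma>)"
proof -
  have "(\<integral>s. gauss_pdf m \<sigma> s * indicator {a..} s \<partial>lborel)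
      = \<sigma> * (\<integral>x. gauss_pdf m \<sigma> (m + \<sigma> * x) * indicator {a..} (m + \<sigma> * x) \<partial>lborel)"
    using lborel_integral_real_affine[of \<sigma> "\<lambda>s. gauss_pdf m \<sigma> s * indicator {a..} s" m] s by simp
  also have "\<dots> = \<sigma> * (\<integral>x. (1 / (\<sigma> * sqrt (2*pi))) * (indicator {(a-m)/\<sigma>..} x * exp (- (x^2) / 2)) \<partial>lborel)"
  proof -
    have "indicator {a..} (m + \<sigma> * x) = (indicator {(a-m)/\<sigma>..} x :: real)" for x
      using s by (auto simp: indicator_def field_simps)
    then show ?thesis using gauss_shift[OF s, of \<sigma> m, simplified] by (simp add: mult.commute)
  qed
  also have "\<dots> = Qfun ((a - m) / \<sigma>)"
    unfolding Qfun_def set_lebesgue_integral_def using s by simp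
  finally show ?thesis .
qed

lemma lower_tail:
  assumes s: "\<sigma> > 0"
  shows "(\<integral>s. gauss_pdf m \<sigma> s * indicator {..a} s \<partial>lborel) = Qfun ((m - a) / \<sigma>)"
proof -
  have "(\<integral>s. gauss_pdf m \<sigma> s * indicator {..a} s \<partial>lborel)
      = \<sigma> * (\<integral>x. gauss_pdf m \<sigma> (m + (-\<sigma>) * x) * indicator {..a} (m + (-\<sigma>) * x) \<partial>lborel)"
    using lborel_integral_real_affine[of "-\<sigma>" "\<lambda>s. gauss_pdf m \<sigma> s * indicator {..a} s" m] s by simp
  also have "\<dots> = \<sigma> * (\<integral>x. (1 / (\<sigma> * sqrt (2*pi))) * (indicator {(m-a)/\<sigma>..} x * exp (- (x^2) / 2)) \<partial>lborel)"
  proof -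
    have "indicator {..a} (m + (-\<sigma>) * x) = (indicator {(m-a)/\<sigma>..} x :: real)" for x
      using s by (auto simp: indicator_def field_simps)
    then show ?thesis using gauss_shift[OF s, of "-\<sigma>" m, simplified] by (simp add: mult.commute)
  qed
  also have "\<dots> = Qfun ((m - a) / \<sigma>)"
    unfolding Qfun_def set_lebesgue_integral_def using s by simp
  finally show ?thesis .
qed

lemma gauss_key:
  assumes s: "\<sigma> > 0" and p: "p > 0" and q: "q > 0"
  shows "p * gauss_pdf m \<sigma> x \<le> q * gauss_pdf m' \<sigma> x \<longleftrightarrow>
         - 2 * \<sigma>^2 * ln (q / p) \<le> (m' - m) * (2 * x - m - m')"
proof -
  define C where "C = sqrt (2 * pi * \<sigma>^2)"
  define A where "A = - ((x - m)^2) / (2 * \<sigma>^2)"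
  define B where "B = - ((x - m')^2) / (2 * \<sigma>^2)"
  have C: "C > 0" using s unfolding C_def by simp
  have "p * gauss_pdf m \<sigma> x \<le> q * gauss_pdf m' \<sigma> x \<longleftrightarrow> p * exp A \<le> q * exp B"
    unfolding gauss_pdf_def C_def[symmetric] A_def B_def using C by (simp add: divide_right_mono field_simps)
  also have "\<dots> \<longleftrightarrow> ln (p * exp A) \<le> ln (q * exp B)" using p q by simp
  also have "\<dots> \<longleftrightarrow> ln p + A \<le> ln q + B" using p q by (simp add: ln_mult)
  also have "\<dots> \<longleftrightarrow> - (ln q - ln p) \<le> B - A" by linarith
  also have "B - A = (m' - m) * (2 * x - m - m') / (2 * \<sigma>^2)"
    unfolding A_def B_def using s by (simp add: field_simps power2_eq_square)
  also have "- (ln q - ln p) \<le> (m' - m) * (2 * x - m - m') / (2 * \<sigma>^2) \<longleftrightarrow>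
        - 2 * \<sigma>^2 * (ln q - ln p) \<le> (m' - m) * (2 * x - m - m')"
    using s by (simp add: field_simps)
  finally show ?thesis using p q by (simp add: ln_div)
qed

lemma region_integral:
  assumes s: "\<sigma> > 0" and p: "p > 0" and q: "q > 0" and mm: "m \<noteq> m'"
  shows "(\<integral>x. gauss_pdf m \<sigma> x * indicator {x. p * gauss_pdf m \<sigma> x \<le> q * gauss_pdf m' \<sigma> x} x \<partial>lborel)
       = Qfun (((m' - m)^2 - 2 * \<sigma>^2 * ln (q / p)) / (2 * \<sigma> * \<bar>m' - m\<bar>))"
proof (cases "m < m'")
  case True
  define a where "a = (m + m') / 2 - \<sigma>^2 * ln (q / p) / (m' - m)"
  have "{x. p * gauss_pdf m \<sigma> x \<le> q * gauss_pdf m' \<sigma> x} = {a..}"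
  proof -
    have "- 2 * \<sigma>^2 * ln (q / p) \<le> (m' - m) * (2 * x - m - m') \<longleftrightarrow> a \<le> x" for x
      using True unfolding a_def by (simp add: field_simps)
    then show ?thesis using gauss_key[OF s p q] by auto
  qed
  moreover have "(a - m) / \<sigma> = ((m' - m)^2 - 2 * \<sigma>^2 * ln (q / p)) / (2 * \<sigma> * \<bar>m' - m\<bar>)"
    using True s unfolding a_def by (simp add: field_simps power2_eq_square)
  ultimately show ?thesis using upper_tail[OF s] by simp
next
  case False
  then have F: "m' < m" using mm by simp
  define a where "a = (m + m') / 2 - \<sigma>^2 * ln (q / p) / (m' - m)"
  have "{x. p * gauss_pdf m \<sigma> x \<le> q * gauss_pdf m' \<sigma> x} = {..a}"
  proof -
    have "- 2 * \<sigma>^2 * ln (q / p) \<le> (m' - m) * (2 * x - m - m') \<longleftrightarrow> x \<le> a" for x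
      using F unfolding a_def by (simp add: field_simps)
    then show ?thesis using gauss_key[OF s p q] by auto
  qed
  moreover have "(m - a) / \<sigma> = ((m' - m)^2 - 2 * \<sigma>^2 * ln (q / p)) / (2 * \<sigma> * \<bar>m' - m\<bar>)"
    using F s unfolding a_def by (simp add: field_simps power2_eq_square)
  ultimately show ?thesis using lower_tail[OF s] by simp
qed

lemma gauss_measurable[measurable]: "gauss_pdf m \<sigma> \<in> borel_measurable borel"
  unfolding gauss_pdf_def[abs_def] by measurable

lemma gauss_nonneg: "gauss_pdf m \<sigma> x \<ge> 0"
  unfolding gauss_pdf_def by simp

lemma gauss_integrable: "integrable lborel (gauss_pdf m \<sigma>)" if "\<sigma> > 0"
proof -
  have "gauss_pdf m \<sigma> = normal_density m \<sigma>"
    by (rule ext) (simp add: gauss_pdf_def normal_density_def)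
  then show ?thesis using that by (simp add: integrable_normal_density)
qed


theorem proposition2:
  fixes N I :: nat and r :: "nat \<Rightarrow> real^3" and \<mu> :: "nat \<Rightarrow> real" and \<sigma> :: real
    and p :: "nat \<Rightarrow> nat \<Rightarrow> real" and Lstar :: "nat \<Rightarrow> nat \<Rightarrow> real \<Rightarrow> real"
  assumes mu_distinct: "inj_on \<mu> {1..N}"
    and sigma_pos: "\<sigma> > 0"
    and p_pos: "\<forall>i\<in>{1..I}. \<forall>n\<in>{1..N}. p i n > 0"
    and p_sum: "\<forall>i\<in>{1..I}. (\<Sum>n\<in>{1..N}. p i n) = 1"
    and Lstar_dec: "decision_fun {1..I} {1..N} Lstar"
    and Lstar_opt: "\<forall>L. decision_fun {1..I} {1..N} L \<longrightarrow>
                      loss {1..I} {1..N} r \<mu> \<sigma> p Lstar \<le> loss {1..I} {1..N} r \<mu> \<sigma> p L"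
  shows "loss_approx {1..I} {1..N} r \<mu> \<sigma> p \<ge> loss {1..I} {1..N} r \<mu> \<sigma> p Lstar"
proof (cases "N = 0")
  case True
  then show ?thesis unfolding loss_def loss_approx_def by simp
next
  case False
  define B where "B = {1..N}"
  have Bfin: "finite B" and Bne: "B \<noteq> {}" using False unfolding B_def by auto
  define g where "g i n s = p i n * gauss_pdf (\<mu> n) \<sigma> s" for i n s
  define P where "P i s n \<longleftrightarrow> n \<in> B \<and> (\<forall>m\<in>B. g i m s \<le> g i n s)" for i s n
  define k where "k i s = (LEAST n. P i s n)" for i s
  define L :: "nat \<Rightarrow> nat \<Rightarrow> real \<Rightarrow> real" where "L i n' s = indicator {s. k i s = n'} s" for i n' s
  have Pex: "\<exists>n. P i s n" for i s
  proof -
    have "Max ((\<lambda>m. g i m s) ` B) \<in> (\<lambda>m. g i m s) ` B"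
      by (rule Max_in) (use Bfin Bne in auto)
    then obtain n where "n \<in> B" "g i n s = Max ((\<lambda>m. g i m s) ` B)" by auto
    then show ?thesis unfolding P_def using Bfin by auto
  qed
  have Pk: "P i s (k i s)" for i s unfolding k_def using Pex by (metis LeastI_ex)
  have gm[measurable]: "(\<lambda>s. g i n s) \<in> borel_measurable borel" for i n
    unfolding g_def by measurable
  have km[measurable]: "(\<lambda>s. k i s) \<in> measurable borel (count_space UNIV)" for i
    unfolding k_def P_def using Bfin by measurable
  have Lset[measurable]: "{s. k i s = n'} \<in> sets lborel" for i n'
    by simp
  have Ldec: "decision_fun {1..I} {1..N} L"
    unfolding decision_fun_def
  proof (intro conjI ballI allI)
    fix i n' s show "L i n' s \<in> {0, 1}" unfolding L_def by (simp add: indicator_def)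
  next
    fix i s
    have "(\<Sum>n'\<in>{1..N}. L i n' s) = (\<Sum>n'\<in>B. if k i s = n' then 1 else 0)"
      unfolding L_def B_def by (simp add: indicator_def)
    also have "\<dots> = 1" using Pk[of i s] Bfin unfolding P_def by simp
    finally show "(\<Sum>n'\<in>{1..N}. L i n' s) = 1" .
  next
    fix i n' show "L i n' \<in> borel_measurable lborel" unfolding L_def[abs_def] by measurable
  qed
  have term_bd: "(\<integral>s. gauss_pdf (\<mu> n) \<sigma> s * L i n' s \<partial>lborel) \<le> Qfun (d_val \<sigma> \<mu> p i n n')"
    if i: "i \<in> {1..I}" and n: "n \<in> B" and n': "n' \<in> B" and nn: "n \<noteq> n'" for i n n'
  proof -
    define S where "S = {x. p i n * gauss_pdf (\<mu> n) \<sigma> x \<le> p i n' * gauss_pdf (\<mu> n') \<sigma> x}"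
    have pn: "p i n > 0" "p i n' > 0" using p_pos i n n' unfolding B_def by auto
    have mm: "\<mu> n \<noteq> \<mu> n'" using inj_onD[OF mu_distinct] n n' nn unfolding B_def by blast
    have "{w \<in> space borel. g i n w \<le> g i n' w} \<in> sets borel"
      by (rule borel_measurable_le[OF gm gm])
    then have Sm[measurable]: "S \<in> sets lborel" unfolding S_def g_def by simp
    have "(\<integral>s. gauss_pdf (\<mu> n) \<sigma> s * L i n' s \<partial>lborel) \<le> (\<integral>s. gauss_pdf (\<mu> n) \<sigma> s * indicator S s \<partial>lborel)"
    proof (rule integral_mono)
      show "integrable lborel (\<lambda>s. gauss_pdf (\<mu> n) \<sigma> s * L i n' s)"
        unfolding L_def by (rule integrable_real_mult_indicator) (auto intro: gauss_integrable sigma_pos)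
      show "integrable lborel (\<lambda>s. gauss_pdf (\<mu> n) \<sigma> s * indicator S s)"
        by (rule integrable_real_mult_indicator[OF Sm gauss_integrable[OF sigma_pos]])
      fix s
      have "L i n' s \<le> indicator S s"
      proof (cases "k i s = n'")
        case True
        then have "g i n s \<le> g i n' s" using Pk[of i s] n unfolding P_def by auto
        then show ?thesis using True unfolding L_def S_def g_def by simp
      qed (simp add: L_def)
      then show "gauss_pdf (\<mu> n) \<sigma> s * L i n' s \<le> gauss_pdf (\<mu> n) \<sigma> s * indicator S s"
        by (simp add: mult_left_mono gauss_nonneg)
    qed
    also have "\<dots> = Qfun (d_val \<sigma> \<mu> p i n n')"
      unfolding S_def d_val_def by (rule region_integral[OF sigma_pos pn mm])
    finally show ?thesis .
  qed
  have "loss {1..I} {1..N} r \<mu> \<sigma> p L \<le> loss_approx {1..I} {1..N} r \<mu> \<sigma> p"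
    unfolding loss_def loss_approx_def
  proof (intro sum_mono, clarify)
    fix i n n' assume i: "i \<in> {1..I}" and n: "n \<in> {1..N}" and n': "n' \<in> {1..N}" and nn: "n \<noteq> n'"
    have "0 < p i n" using p_pos i n by blast
    then have "0 \<le> p i n * dist (r n) (r n')" by simp
    then show "p i n * dist (r n) (r n') * (\<integral>s. gauss_pdf (\<mu> n) \<sigma> s * L i n' s \<partial>lborel)
             \<le> p i n * dist (r n) (r n') * Qfun (d_val \<sigma> \<mu> p i n n')"
      using term_bd[OF i _ _ nn] n n' unfolding B_def by (simp add: mult_left_mono)
  qed
  then show ?thesis using Lstar_opt Ldec by fastforce
qed

end
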